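(* Let $(G,+,\bullet)$ be an interchange near ring containing an annihilator, i.e. an element $a\in G$ with $a\bullet x = x\bullet a = a$ for every $x\in G$. Then $(G,\bullet)$ is a zero semigroup: in fact $x\bullet y = 0$ for all $x,y\in G$.
   Context: An interchange near ring is a triple $(G,+,\bullet)$ where $(G,+)$ is a group (written additively, not necessarily abelian, with identity $0$) and $\bullet$ is a binary operation on $G$ satisfying the interchange law $(w+x)\bullet(y+z) = (w\bullet y)+(x\bullet z)$ for all $w,x,y,z\in G$. A zero semigroup is a semigroup $(S,\cdot)$ satisfying $w\cdot x = y\cdot z$ for all $w,x,y,z\in S$. *)

theory Defs
  imports Main
begin

definition interchange_near_ring :: "('a::group_add \<Rightarrow> 'a \<Rightarrow> 'a) \<Rightarrow> bool" where
  "interchange_near_ring m \<longleftrightarrow>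
     (\<forall>w x y z. m (w + x) (y + z) = m w y + m x z)"

definition zero_semigroup :: "('a \<Rightarrow> 'a \<Rightarrow> 'a) \<Rightarrow> bool" where
  "zero_semigroup m \<longleftrightarrow>
     (\<forall>x y z. m (m x y) z = m x (m y z)) \<and> (\<forall>w x y z. m w x = m y z)"

end

theory Submission
  imports Defs
begin

theorem proposition2p3:
  fixes m :: "'a::group_add \<Rightarrow> 'a \<Rightarrow> 'a"
  assumes "interchange_near_ring m"
    and "\<exists>a. \<forall>x. m a x = a \<and> m x a = a"
  shows "zero_semigroup m \<and> (\<forall>x y. m x y = 0)"
proof -
  have I: "\<And>w x y z. m (w + x) (y + z) = m w y + m x z"
    using assms(1) unfolding interchange_near_ring_def by blast
  obtain a where A1: "\<And>x. m a x = a" and A2: "\<And>x. m x a = a" using assms(2) by blast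
  have e: "m (a + 0) (0 + a) = m a 0 + m 0 a" by (rule I)
  have "m (a + 0) (0 + a) = a" by (simp only: add_0_right add_0_left A1)
  moreover have "m a 0 + m 0 a = a + a" by (simp only: A1 A2)
  ultimately have "a = a + a" using e by simp
  then have "a + 0 = a + a" by simp
  then have a0: "a = 0" by (rule add_left_imp_eq[symmetric])
  have Z: "\<And>x y. m x y = 0"
  proof -
    fix x y
    have "m x y = m (x + 0) (0 + y)" by (simp only: add_0_right add_0_left)
    also have "\<dots> = m x 0 + m 0 y" by (rule I)
    also have "\<dots> = m x a + m a y" using a0 by simp
    also have "\<dots> = 0" using A1 A2 a0 by simp
    finally show "m x y = 0" .
  qed
  show ?thesis unfolding zero_semigroup_def by (simp add: Z)
qed

end
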